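(* Let $\mathbf{M}\in\mathbb{R}^{d_L\times d_0}$, $k\ge\min\{d_0,d_L\}$, and $$\mathcal{L}(\mathbf{L},\mathbf{R}) = \|\mathbf{M}-\mathbf{L}\mathbf{R}^\top\|_F^2,\qquad \mathbf{L}\in\mathbb{R}^{d_L\times k},\ \mathbf{R}\in\mathbb{R}^{d_0\times k}.$$ If $(\mathbf{L},\mathbf{R})$ satisfies $\mathbf{M}=\mathbf{L}\mathbf{R}^\top$, then $$\lambda_{\max}(\nabla^2\mathcal{L}(\mathbf{L},\mathbf{R})) = 2\big(\sigma_{\max}(\mathbf{L})^2+\sigma_{\max}(\mathbf{R})^2\big).$$
   Context: $\nabla^2\mathcal{L}(\mathbf{L},\mathbf{R})$ is the Hessian of $\mathcal{L}$ viewed as a function of the vector of all entries of $\mathbf{L}$ and $\mathbf{R}$; $\lambda_{\max}$ is its largest eigenvalue and $\sigma_{\max}$ denotes the largest singular value. *)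

theory Defs
  imports "HOL-Analysis.Analysis"
begin

definition frob_norm :: "real^'n^'m \<Rightarrow> real" where
  "frob_norm A = sqrt (\<Sum>i\<in>UNIV. \<Sum>j\<in>UNIV. (A $ i $ j)^2)"

definition is_eigenvalue :: "real^'n^'n \<Rightarrow> real \<Rightarrow> bool" where
  "is_eigenvalue A l \<longleftrightarrow> (\<exists>v. v \<noteq> 0 \<and> A *v v = l *\<^sub>R v)"

definition lambda_max :: "real^'n^'n \<Rightarrow> real" where
  "lambda_max A = Max {l. is_eigenvalue A l}"

definition sigma_max :: "real^'n^'m \<Rightarrow> real" where
  "sigma_max A = sqrt (lambda_max (transpose A ** A))"

definition partial :: "(real^'i \<Rightarrow> real) \<Rightarrow> 'i \<Rightarrow> real^'i \<Rightarrow> real" where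
  "partial f i x = deriv (\<lambda>t. f (x + t *\<^sub>R axis i 1)) 0"

definition hessian :: "(real^'i \<Rightarrow> real) \<Rightarrow> real^'i \<Rightarrow> real^'i^'i" where
  "hessian f x = (\<chi> i j. partial (\<lambda>y. partial f j y) i x)"

definition pack :: "real^'k^'m \<Rightarrow> real^'k^'n \<Rightarrow> real^(('m \<times> 'k) + ('n \<times> 'k))" where
  "pack L R = (\<chi> p. case p of Inl (i, j) \<Rightarrow> L $ i $ j | Inr (i, j) \<Rightarrow> R $ i $ j)"

definition L_of :: "real^(('m \<times> 'k) + ('n::finite \<times> 'k)) \<Rightarrow> real^'k^'m" where
  "L_of z = (\<chi> i j. z $ Inl (i, j))"

definition R_of :: "real^(('m::finite \<times> 'k) + ('n \<times> 'k)) \<Rightarrow> real^'k^'n" where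
  "R_of z = (\<chi> i j. z $ Inr (i, j))"

definition loss :: "real^'n::finite^'m::finite \<Rightarrow> real^(('m \<times> 'k::finite) + ('n \<times> 'k)) \<Rightarrow> real" where
  "loss M z = (frob_norm (M - L_of z ** transpose (R_of z)))^2"

end

theory Submission
  imports Defs
begin


lemma sym_inner:
  fixes A :: "real^'n^'n"
  assumes "transpose A = A"
  shows "x \<bullet> (A *v y) = (A *v x) \<bullet> y"
proof -
  have "x \<bullet> (A *v y) = (x v* A) \<bullet> y" by (simp add: dot_lmul_matrix)
  also have "x v* A = transpose A *v x" by simp
  finally show ?thesis using assms by simp
qed

lemma sym_max_exists:
  fixes A :: "real^'n^'n"
  assumes sym: "transpose A = A"
  shows "\<exists>v \<mu>. norm v = 1 \<and> A *v v = \<mu> *\<^sub>R v \<and> (\<forall>x. x \<bullet> (A *v x) \<le> \<mu> * (norm x)^2)"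
proof -
  let ?f = "\<lambda>x::real^'n. x \<bullet> (A *v x)"
  have cont: "continuous_on (sphere 0 1) ?f"
  proof -
    have "bounded_linear (\<lambda>x::real^'n. A *v x)"
      using matrix_vector_mul_linear linear_conv_bounded_linear by blast
    hence "continuous_on (sphere 0 1) (\<lambda>x::real^'n. A *v x)"
      using linear_continuous_on by blast
    thus ?thesis by (intro continuous_on_inner continuous_on_id)
  qed
  have ne: "sphere (0::real^'n) 1 \<noteq> {}"
    by (metis empty_iff mem_sphere_0 norm_axis_1)
  obtain v where v: "v \<in> sphere 0 1" and vmax: "\<And>y. y \<in> sphere 0 1 \<Longrightarrow> ?f y \<le> ?f v"
    using continuous_attains_sup[OF compact_sphere ne cont] by blast
  define \<mu> where "\<mu> = ?f v"
  have nv: "norm v = 1" using v by simp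
  have bound: "x \<bullet> (A *v x) \<le> \<mu> * (norm x)^2" for x
  proof (cases "x = 0")
    case True then show ?thesis by simp
  next
    case False
    let ?y = "(1 / norm x) *\<^sub>R x"
    have "?y \<in> sphere 0 1" using False by simp
    hence "?f ?y \<le> \<mu>" using vmax \<mu>_def by blast
    moreover have "?f ?y = (1/norm x)^2 * ?f x"
      by (simp add: matrix_vector_mult_scaleR power2_eq_square)
    ultimately have "(1/norm x)^2 * ?f x \<le> \<mu>" by simp
    hence "(norm x)^2 * ((1/norm x)^2 * ?f x) \<le> (norm x)^2 * \<mu>"
      by (simp add: mult_left_mono)
    thus ?thesis using False by (simp add: field_simps power2_eq_square)
  qed
  define b where "b = A *v v - \<mu> *\<^sub>R v"
  have vb: "(A *v v) \<bullet> b - \<mu> * (v \<bullet> b) = b \<bullet> b"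
    unfolding b_def by (simp add: inner_diff_left inner_diff_right algebra_simps)
  have key: "2 * t * (b \<bullet> b) + t^2 * (b \<bullet> (A *v b) - \<mu> * (b \<bullet> b)) \<le> 0" for t :: real
  proof -
    have "(v + t *\<^sub>R b) \<bullet> (A *v (v + t *\<^sub>R b)) \<le> \<mu> * (norm (v + t *\<^sub>R b))^2"
      by (rule bound)
    moreover have "(v + t *\<^sub>R b) \<bullet> (A *v (v + t *\<^sub>R b)) =
        ?f v + 2 * t * ((A *v v) \<bullet> b) + t^2 * (b \<bullet> (A *v b))"
      using sym_inner[OF sym, of v b]
      by (simp add: matrix_vector_right_distrib matrix_vector_mult_scaleR inner_add_left inner_add_right
           algebra_simps power2_eq_square inner_commute)
    moreover have "(norm (v + t *\<^sub>R b))^2 = 1 + 2 * t * (v \<bullet> b) + t^2 * (b \<bullet> b)"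
    proof -
      have vv: "v \<bullet> v = 1" using nv by (simp add: dot_square_norm)
      show ?thesis unfolding power2_norm_eq_inner
        by (simp add: inner_add_left inner_add_right vv algebra_simps power2_eq_square inner_commute)
    qed
    ultimately have "?f v + 2 * t * ((A *v v) \<bullet> b) + t^2 * (b \<bullet> (A *v b))
        \<le> \<mu> * (1 + 2 * t * (v \<bullet> b) + t^2 * (b \<bullet> b))" by simp
    hence "2 * t * ((A *v v) \<bullet> b - \<mu> * (v \<bullet> b)) + t^2 * (b \<bullet> (A *v b) - \<mu> * (b \<bullet> b)) \<le> 0"
      unfolding \<mu>_def by (simp add: algebra_simps)
    thus ?thesis using vb by simp
  qed
  have "b = 0"
  proof (rule ccontr)
    assume "b \<noteq> 0"
    hence bb: "b \<bullet> b > 0" by simp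
    define c where "c = b \<bullet> (A *v b) - \<mu> * (b \<bullet> b)"
    define t where "t = (b \<bullet> b) / (\<bar>c\<bar> + 1)"
    have tpos: "t > 0" using bb by (simp add: t_def)
    have "2 * t * (b \<bullet> b) + t^2 * c \<le> 0" using key[of t] c_def by simp
    hence "t * (2 * (b \<bullet> b) + t * c) \<le> 0" by (simp add: algebra_simps power2_eq_square)
    hence le: "2 * (b \<bullet> b) + t * c \<le> 0" using tpos by (simp add: mult_le_0_iff)
    have "t * \<bar>c\<bar> \<le> b \<bullet> b"
      using bb by (simp add: t_def field_simps)
    moreover have "- (t * \<bar>c\<bar>) \<le> t * c" using tpos by (simp add: abs_if)
    ultimately show False using le bb by linarith
  qed
  hence "A *v v = \<mu> *\<^sub>R v" by (simp add: b_def)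
  thus ?thesis using nv bound by blast
qed

lemma eig_finite:
  fixes A :: "real^'n^'n"
  assumes sym: "transpose A = A"
  shows "finite {l. is_eigenvalue A l}"
proof (rule ccontr)
  let ?S = "{l. is_eigenvalue A l}"
  assume inf: "infinite ?S"
  obtain T where T: "finite T" "card T = CARD('n) + 1" "T \<subseteq> ?S"
    using infinite_arbitrarily_large[OF inf] by blast
  define g where "g l = (SOME v. v \<noteq> 0 \<and> A *v v = l *\<^sub>R v)" for l
  have g: "g l \<noteq> 0 \<and> A *v g l = l *\<^sub>R g l" if "l \<in> T" for l
  proof -
    have "\<exists>v. v \<noteq> 0 \<and> A *v v = l *\<^sub>R v" using T(3) that is_eigenvalue_def by blast
    thus ?thesis unfolding g_def by (rule someI_ex)
  qed
  have inj: "inj_on g T"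
  proof (rule inj_onI)
    fix l m assume lm: "l \<in> T" "m \<in> T" "g l = g m"
    hence "l *\<^sub>R g l = m *\<^sub>R g l" using g by metis
    thus "l = m" using g[OF lm(1)] by simp
  qed
  have orth: "pairwise orthogonal (g ` T)"
  proof (clarsimp simp: pairwise_def orthogonal_def)
    fix l m assume lm: "l \<in> T" "m \<in> T" "g l \<noteq> g m"
    have "l * (g l \<bullet> g m) = (A *v g l) \<bullet> g m" using g[OF lm(1)] by simp
    also have "\<dots> = g l \<bullet> (A *v g m)" using sym_inner[OF sym] by simp
    also have "\<dots> = m * (g l \<bullet> g m)" using g[OF lm(2)] by simp
    finally have "(l - m) * (g l \<bullet> g m) = 0" by (simp add: algebra_simps)
    moreover have "l \<noteq> m" using lm by auto
    ultimately show "g l \<bullet> g m = 0" by simp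
  qed
  have "0 \<notin> g ` T" using g by force
  hence ind: "independent (g ` T)" using pairwise_orthogonal_independent orth by blast
  have "card (g ` T) \<le> CARD('n)"
    using independent_bound[OF ind] by (simp add: dim_UNIV)
  moreover have "card (g ` T) = CARD('n) + 1" using card_image[OF inj] T by simp
  ultimately show False by simp
qed

lemma sym_lambda_max:
  fixes A :: "real^'n^'n"
  assumes sym: "transpose A = A"
  shows "\<exists>v. norm v = 1 \<and> A *v v = lambda_max A *\<^sub>R v \<and> (\<forall>x. x \<bullet> (A *v x) \<le> lambda_max A * (norm x)^2)"
proof -
  obtain v \<mu> where v: "norm v = 1" "A *v v = \<mu> *\<^sub>R v" and b: "\<And>x. x \<bullet> (A *v x) \<le> \<mu> * (norm x)^2"
    using sym_max_exists[OF sym] by blast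
  have "lambda_max A = \<mu>"
    unfolding lambda_max_def
  proof (rule Max_eqI[OF eig_finite[OF sym]])
    show "\<mu> \<in> {l. is_eigenvalue A l}" unfolding is_eigenvalue_def
      using v by (intro CollectI exI[of _ v]) auto
    fix l assume "l \<in> {l. is_eigenvalue A l}"
    then obtain x where x: "x \<noteq> 0" "A *v x = l *\<^sub>R x" by (auto simp: is_eigenvalue_def)
    have "l * (norm x)^2 = x \<bullet> (A *v x)" using x by (simp add: power2_norm_eq_inner)
    also have "\<dots> \<le> \<mu> * (norm x)^2" by (rule b)
    finally show "l \<le> \<mu>" using x by simp
  qed
  thus ?thesis using v b by auto
qed



definition res :: "real^'n::finite^'m::finite \<Rightarrow> real^(('m \<times> 'k::finite) + ('n \<times> 'k)) \<Rightarrow> 'm \<Rightarrow> 'n \<Rightarrow> real" where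
  "res M y a b = M$a$b - (\<Sum>c\<in>UNIV. y$Inl(a,c) * y$Inr(b,c))"

definition dd :: "real^(('m::finite \<times> 'k::finite) + ('n::finite \<times> 'k)) \<Rightarrow> real^(('m \<times> 'k) + ('n \<times> 'k)) \<Rightarrow> 'm \<Rightarrow> 'n \<Rightarrow> real" where
  "dd y w a b = (\<Sum>c\<in>UNIV. w$Inl(a,c) * y$Inr(b,c) + y$Inl(a,c) * w$Inr(b,c))"

definition qq :: "real^(('m::finite \<times> 'k::finite) + ('n::finite \<times> 'k)) \<Rightarrow> 'm \<Rightarrow> 'n \<Rightarrow> real" where
  "qq w a b = (\<Sum>c\<in>UNIV. w$Inl(a,c) * w$Inr(b,c))"

lemma loss_eq:
  fixes M :: "real^'n::finite^'m::finite" and z :: "real^(('m \<times> 'k::finite) + ('n \<times> 'k))"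
  shows "loss M z = (\<Sum>a\<in>UNIV. \<Sum>b\<in>UNIV. (res M z a b)^2)"
  unfolding loss_def frob_norm_def
  by (simp add: sum_nonneg res_def matrix_matrix_mult_def transpose_def L_of_def R_of_def)

lemma res_line:
  "res M (y + t *\<^sub>R w) a b = res M y a b + t * (- dd y w a b) + t^2 * (- qq w a b)"
  unfolding res_def dd_def qq_def
  by (simp add: algebra_simps sum.distrib sum_distrib_left power2_eq_square sum_subtractf)

lemma dd_line:
  "dd (y + t *\<^sub>R w) v a b = dd y v a b + t * dd w v a b"
  unfolding dd_def
  by (simp add: algebra_simps sum.distrib sum_distrib_left)

lemma gen_deriv:
  "((\<lambda>t::real. \<Sum>a\<in>A. \<Sum>b\<in>B. (r a b + t * p a b + t^2 * s a b) * (u a b + t * w a b + t^2 * z a b))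
     has_field_derivative (\<Sum>a\<in>A. \<Sum>b\<in>B. p a b * u a b + r a b * w a b)) (at 0)"
  by (rule derivative_eq_intros refl | simp add: mult.commute)+

lemma partial_eqI:
  assumes "(\<lambda>t. f (x + t *\<^sub>R axis i 1)) = F" "(F has_field_derivative D) (at 0)"
  shows "partial f i x = D"
  unfolding partial_def assms(1) using DERIV_imp_deriv[OF assms(2)] .

lemma partial1:
  fixes M :: "real^'n::finite^'m::finite" and y :: "real^(('m \<times> 'k::finite) + ('n \<times> 'k))"
  shows "partial (loss M) j y = (\<Sum>a\<in>UNIV. \<Sum>b\<in>UNIV. (- dd y (axis j 1) a b) * res M y a b + res M y a b * (- dd y (axis j 1) a b))"
proof -
  let ?e = "axis j 1 :: real^(('m \<times> 'k) + ('n \<times> 'k))"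
  have "(\<lambda>t. loss M (y + t *\<^sub>R ?e)) = (\<lambda>t. \<Sum>a\<in>UNIV. \<Sum>b\<in>UNIV.
      (res M y a b + t * (- dd y ?e a b) + t^2 * (- qq ?e a b)) *
      (res M y a b + t * (- dd y ?e a b) + t^2 * (- qq ?e a b)))"
    by (rule ext) (simp add: loss_eq res_line power2_eq_square)
  thus ?thesis by (rule partial_eqI[OF _ gen_deriv])
qed

lemma partial1':
  fixes M :: "real^'n::finite^'m::finite" and y :: "real^(('m \<times> 'k::finite) + ('n \<times> 'k))"
  shows "partial (loss M) j y = (\<Sum>a\<in>UNIV. \<Sum>b\<in>UNIV. (2 * res M y a b) * (- dd y (axis j 1) a b))"
  unfolding partial1 by (simp add: algebra_simps)

lemma hess_entry:
  fixes M :: "real^'n::finite^'m::finite" and x :: "real^(('m \<times> 'k::finite) + ('n \<times> 'k))"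
  assumes "\<And>a b. res M x a b = 0"
  shows "hessian (loss M) x $ i $ j = 2 * (\<Sum>a\<in>UNIV. \<Sum>b\<in>UNIV. dd x (axis i 1) a b * dd x (axis j 1) a b)"
proof -
  let ?e = "axis i 1 :: real^(('m \<times> 'k) + ('n \<times> 'k))"
  let ?f = "axis j 1 :: real^(('m \<times> 'k) + ('n \<times> 'k))"
  have "(\<lambda>t. partial (loss M) j (x + t *\<^sub>R ?e)) = (\<lambda>t. \<Sum>a\<in>UNIV. \<Sum>b\<in>UNIV.
      (2 * res M x a b + t * (- 2 * dd x ?e a b) + t^2 * (- 2 * qq ?e a b)) *
      (- dd x ?f a b + t * (- dd ?e ?f a b) + t^2 * 0))"
    by (rule ext) (simp add: partial1' res_line dd_line algebra_simps)
  hence "partial (\<lambda>y. partial (loss M) j y) i x = (\<Sum>a\<in>UNIV. \<Sum>b\<in>UNIV.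
       (- 2 * dd x ?e a b) * (- dd x ?f a b) + (2 * res M x a b) * (- dd ?e ?f a b))"
    by (rule partial_eqI[OF _ gen_deriv])
  also have "\<dots> = 2 * (\<Sum>a\<in>UNIV. \<Sum>b\<in>UNIV. dd x ?e a b * dd x ?f a b)"
    using assms by (simp add: sum_distrib_left mult.assoc)
  finally show ?thesis by (simp add: hessian_def)
qed



lemma sum_UNIV_sum: "sum f (UNIV :: ('a::finite + 'b::finite) set) = (\<Sum>a\<in>UNIV. f (Inl a)) + (\<Sum>b\<in>UNIV. f (Inr b))"
proof -
  have "sum f (UNIV :: ('a + 'b) set) = sum f (Inl ` UNIV) + sum f (Inr ` UNIV)"
    by (subst UNIV_sum, rule sum.union_disjoint) auto
  also have "\<dots> = (\<Sum>a\<in>UNIV. f (Inl a)) + (\<Sum>b\<in>UNIV. f (Inr b))"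
    by (simp add: sum.reindex)
  finally show ?thesis .
qed

lemma swap3: "(\<Sum>j\<in>A. \<Sum>a\<in>B. \<Sum>b\<in>C. f j a b) = (\<Sum>a\<in>B. \<Sum>b\<in>C. \<Sum>j\<in>A. f j a b)"
  by (subst sum.swap) (rule sum.cong[OF refl], rule sum.swap)

lemma norm_rows: "(norm (A::real^'n::finite^'m::finite))^2 = (\<Sum>a\<in>UNIV. (norm (A$a))^2)"
  by (simp add: power2_norm_eq_inner inner_vec_def)

lemma norm_vec_sq: "(norm (v::real^'n::finite))^2 = (\<Sum>a\<in>UNIV. (v$a)^2)"
  by (simp only: power2_norm_eq_inner inner_vec_def inner_real_def) (simp add: power2_eq_square)

lemma norm_mat_sq: "(norm (A::real^'n::finite^'m::finite))^2 = (\<Sum>a\<in>UNIV. \<Sum>b\<in>UNIV. (A$a$b)^2)"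
  by (simp only: norm_rows norm_vec_sq)

lemma norm_transpose_sq: "(norm (transpose (A::real^'n::finite^'m::finite)))^2 = (norm A)^2"
  unfolding norm_mat_sq by (simp add: transpose_def) (rule sum.swap)

lemma norm_pack_sq:
  fixes v :: "real^(('m::finite \<times> 'k::finite) + ('n::finite \<times> 'k))"
  shows "(norm v)^2 = (norm (L_of v))^2 + (norm (R_of v))^2"
proof -
  have pr: "(\<Sum>q\<in>(UNIV::('a::finite \<times> 'b::finite) set). f q) = (\<Sum>a\<in>UNIV. \<Sum>c\<in>UNIV. f (a,c))" for f :: "_ \<Rightarrow> real"
    by (simp add: sum.cartesian_product)
  have "(norm v)^2 = (\<Sum>q\<in>UNIV. (v$Inl q)^2) + (\<Sum>q\<in>UNIV. (v$Inr q)^2)"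
    by (simp only: norm_vec_sq sum_UNIV_sum)
  also have "\<dots> = (\<Sum>a\<in>UNIV. \<Sum>c\<in>UNIV. (v$Inl (a,c))^2) + (\<Sum>a\<in>UNIV. \<Sum>c\<in>UNIV. (v$Inr (a,c))^2)"
    by (simp only: pr)
  also have "\<dots> = (norm (L_of v))^2 + (norm (R_of v))^2"
    by (simp add: norm_mat_sq L_of_def R_of_def)
  finally show ?thesis .
qed

lemma L_of_pack: "L_of (pack P Q) = P" by (simp add: vec_eq_iff L_of_def pack_def)
lemma R_of_pack: "R_of (pack P Q) = Q" by (simp add: vec_eq_iff R_of_def pack_def)

lemma axis_sum: "(\<Sum>i\<in>UNIV. v$i * (axis i (1::real))$p) = v$p"
  by (simp add: axis_def if_distrib sum.delta sum.delta' cong: if_cong)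

lemma dd_lin:
  fixes x v :: "real^(('m::finite \<times> 'k::finite) + ('n::finite \<times> 'k))"
  shows "(\<Sum>i\<in>UNIV. v$i * dd x (axis i 1) a b) = dd x v a b"
proof -
  let ?e = "\<lambda>i. axis i 1 :: real^(('m \<times> 'k) + ('n \<times> 'k))"
  have "(\<Sum>i\<in>UNIV. v$i * dd x (?e i) a b) =
     (\<Sum>i\<in>UNIV. \<Sum>c\<in>UNIV. (v$i * ?e i $Inl(a,c)) * x$Inr(b,c) + x$Inl(a,c) * (v$i * ?e i $Inr(b,c)))"
    unfolding dd_def sum_distrib_left by (simp only: distrib_left mult.assoc mult.left_commute)
  also have "\<dots> = (\<Sum>c\<in>UNIV. \<Sum>i\<in>UNIV. (v$i * ?e i $Inl(a,c)) * x$Inr(b,c) + x$Inl(a,c) * (v$i * ?e i $Inr(b,c)))"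
    by (rule sum.swap)
  also have "\<dots> = (\<Sum>c\<in>UNIV. (\<Sum>i\<in>UNIV. v$i * ?e i $Inl(a,c)) * x$Inr(b,c) + x$Inl(a,c) * (\<Sum>i\<in>UNIV. v$i * ?e i $Inr(b,c)))"
    by (simp only: sum.distrib sum_distrib_left sum_distrib_right)
  also have "\<dots> = dd x v a b" by (simp only: axis_sum dd_def)
  finally show ?thesis .
qed




lemma quad_form:
  fixes M :: "real^'n::finite^'m::finite" and x v :: "real^(('m \<times> 'k::finite) + ('n \<times> 'k))"
  assumes "\<And>a b. res M x a b = 0"
  shows "v \<bullet> (hessian (loss M) x *v v) = 2 * (\<Sum>a\<in>UNIV. \<Sum>b\<in>UNIV. (dd x v a b)^2)"
proof -
  have row: "(hessian (loss M) x *v v) $ i = 2 * (\<Sum>a\<in>UNIV. \<Sum>b\<in>UNIV. dd x (axis i 1) a b * dd x v a b)" for i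
  proof -
    have "(hessian (loss M) x *v v) $ i = (\<Sum>j\<in>UNIV. v$j * (2 * (\<Sum>a\<in>UNIV. \<Sum>b\<in>UNIV. dd x (axis i 1) a b * dd x (axis j 1) a b)))"
      by (simp add: matrix_vector_mult_def hess_entry[OF assms] mult.commute)
    also have "\<dots> = (\<Sum>j\<in>UNIV. \<Sum>a\<in>UNIV. \<Sum>b\<in>UNIV. 2 * (dd x (axis i 1) a b * (v$j * dd x (axis j 1) a b)))"
      by (simp add: sum_distrib_left algebra_simps)
    also have "\<dots> = (\<Sum>a\<in>UNIV. \<Sum>b\<in>UNIV. \<Sum>j\<in>UNIV. 2 * (dd x (axis i 1) a b * (v$j * dd x (axis j 1) a b)))"
      by (rule swap3)
    also have "\<dots> = 2 * (\<Sum>a\<in>UNIV. \<Sum>b\<in>UNIV. dd x (axis i 1) a b * (\<Sum>j\<in>UNIV. v$j * dd x (axis j 1) a b))"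
      by (simp add: sum_distrib_left)
    finally show ?thesis by (simp add: dd_lin)
  qed
  have "v \<bullet> (hessian (loss M) x *v v) = (\<Sum>i\<in>UNIV. v$i * (2 * (\<Sum>a\<in>UNIV. \<Sum>b\<in>UNIV. dd x (axis i 1) a b * dd x v a b)))"
    by (simp add: inner_vec_def row)
  also have "\<dots> = (\<Sum>i\<in>UNIV. \<Sum>a\<in>UNIV. \<Sum>b\<in>UNIV. 2 * ((v$i * dd x (axis i 1) a b) * dd x v a b))"
    by (simp add: sum_distrib_left algebra_simps)
  also have "\<dots> = (\<Sum>a\<in>UNIV. \<Sum>b\<in>UNIV. \<Sum>i\<in>UNIV. 2 * ((v$i * dd x (axis i 1) a b) * dd x v a b))"
    by (rule swap3)
  also have "\<dots> = 2 * (\<Sum>a\<in>UNIV. \<Sum>b\<in>UNIV. (\<Sum>i\<in>UNIV. v$i * dd x (axis i 1) a b) * dd x v a b)"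
    by (simp add: sum_distrib_left sum_distrib_right)
  finally show ?thesis by (simp only: dd_lin power2_eq_square)
qed

lemma hess_sym:
  fixes M :: "real^'n::finite^'m::finite" and x :: "real^(('m \<times> 'k::finite) + ('n \<times> 'k))"
  assumes "\<And>a b. res M x a b = 0"
  shows "transpose (hessian (loss M) x) = hessian (loss M) x"
proof -
  have "hessian (loss M) x $ j $ i = hessian (loss M) x $ i $ j" for i j
    unfolding hess_entry[OF assms] by (simp only: mult.commute)
  thus ?thesis by (simp add: vec_eq_iff transpose_def)
qed

lemma gram_quad: "(x::real^'k::finite) \<bullet> ((transpose L ** L) *v x) = (norm ((L::real^'k^'m::finite) *v x))^2"
proof -
  have "(transpose L ** L) *v x = transpose L *v (L *v x)" by (simp add: matrix_vector_mul_assoc)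
  hence "x \<bullet> ((transpose L ** L) *v x) = ((L *v x) v* L) \<bullet> x" by (simp add: inner_commute)
  also have "\<dots> = (L *v x) \<bullet> (L *v x)" by (simp add: dot_lmul_matrix)
  finally show ?thesis by (simp add: power2_norm_eq_inner)
qed

lemma gram_sym: "transpose (transpose L ** L) = transpose L ** (L::real^'k::finite^'m::finite)"
  by (simp add: matrix_transpose_mul)

lemma gram_facts:
  fixes L :: "real^'k::finite^'m::finite"
  shows "\<exists>y. norm y = 1 \<and> (norm (L *v y))^2 = lambda_max (transpose L ** L) \<and>
     (\<forall>z. (norm (L *v z))^2 \<le> lambda_max (transpose L ** L) * (norm z)^2)"
proof -
  obtain y where y: "norm y = 1" "(transpose L ** L) *v y = lambda_max (transpose L ** L) *\<^sub>R y"
    and b: "\<forall>z. z \<bullet> ((transpose L ** L) *v z) \<le> lambda_max (transpose L ** L) * (norm z)^2"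
    using sym_lambda_max[OF gram_sym[of L]] by blast
  have "(norm (L *v y))^2 = y \<bullet> ((transpose L ** L) *v y)" by (simp add: gram_quad)
  also have "\<dots> = lambda_max (transpose L ** L) * (y \<bullet> y)" using y(2) by simp
  also have "\<dots> = lambda_max (transpose L ** L)" using y(1) by (simp add: dot_square_norm)
  finally show ?thesis using y(1) b gram_quad by metis
qed

lemma unit_dir: "\<exists>a::real^'m::finite. norm a = 1 \<and> u = norm u *\<^sub>R a"
proof (cases "u = 0")
  case True
  then show ?thesis by (intro exI[of _ "axis undefined 1"]) (simp add: norm_axis_1)
next
  case False
  then show ?thesis by (intro exI[of _ "(1 / norm u) *\<^sub>R u"]) simp
qed



lemma sq_bound:
  fixes p q a b mR mL :: real
  assumes "0 \<le> p" "0 \<le> q" "0 \<le> a" "0 \<le> b" "0 \<le> mR" "0 \<le> mL"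
    and "p^2 \<le> mR * a^2" "q^2 \<le> mL * b^2"
  shows "(p + q)^2 \<le> (mR + mL) * (a^2 + b^2)"
proof -
  define sR where "sR = sqrt mR"
  define sL where "sL = sqrt mL"
  have sR2: "sR^2 = mR" "sR \<ge> 0" using assms by (auto simp: sR_def)
  have sL2: "sL^2 = mL" "sL \<ge> 0" using assms by (auto simp: sL_def)
  have "p^2 \<le> (sR * a)^2" using assms sR2 by (simp add: power_mult_distrib)
  hence p: "p \<le> sR * a" using power2_le_imp_le assms sR2 by (metis mult_nonneg_nonneg)
  have "q^2 \<le> (sL * b)^2" using assms sL2 by (simp add: power_mult_distrib)
  hence q: "q \<le> sL * b" using power2_le_imp_le assms sL2 by (metis mult_nonneg_nonneg)
  have "(p + q)^2 \<le> (sR * a + sL * b)^2"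
    using p q assms by (intro power_mono add_mono) auto
  also have "\<dots> \<le> (sR * a + sL * b)^2 + (sR * b - sL * a)^2" by simp
  also have "\<dots> = (sR^2 + sL^2) * (a^2 + b^2)" by (simp add: algebra_simps power2_eq_square)
  finally show ?thesis using sR2 sL2 by simp
qed

theorem corollary1:
  fixes M :: "real^'n^'m" and L :: "real^'k^'m" and R :: "real^'k^'n"
  assumes "CARD('k) \<ge> min CARD('n) CARD('m)"
    and "M = L ** transpose R"
  shows "lambda_max (hessian (loss M) (pack L R :: real^(('m \<times> 'k) + ('n \<times> 'k))))
           = 2 * ((sigma_max L)^2 + (sigma_max R)^2)"
proof -
  define x where "x = (pack L R :: real^(('m \<times> 'k) + ('n \<times> 'k)))"
  have res0: "res M x a b = 0" for a b
    unfolding res_def x_def assms(2) by (simp add: pack_def matrix_matrix_mult_def transpose_def)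
  define H where "H = hessian (loss M) x"
  have SH: "\<exists>v. norm v = 1 \<and> H *v v = lambda_max H *\<^sub>R v \<and> (\<forall>z. z \<bullet> (H *v z) \<le> lambda_max H * (norm z)^2)"
    unfolding H_def by (rule sym_lambda_max[OF hess_sym[OF res0]])
  then obtain v0 where v0all: "norm v0 = 1 \<and> H *v v0 = lambda_max H *\<^sub>R v0 \<and> (\<forall>z. z \<bullet> (H *v z) \<le> lambda_max H * (norm z)^2)"
    by (rule exE)
  have v0: "norm v0 = 1" "H *v v0 = lambda_max H *\<^sub>R v0" using v0all by simp_all
  have bH: "z \<bullet> (H *v z) \<le> lambda_max H * (norm z)^2" for z using v0all by simp
  define mL where "mL = lambda_max (transpose L ** L)"
  define mR where "mR = lambda_max (transpose R ** R)"
  obtain yL where yLall: "norm yL = 1 \<and> (norm (L *v yL))^2 = mL \<and> (\<forall>z. (norm (L *v z))^2 \<le> mL * (norm z)^2)"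
    using gram_facts[of L] unfolding mL_def by (rule exE)
  have yL: "norm yL = 1" "(norm (L *v yL))^2 = mL" using yLall by simp_all
  have bL: "(norm (L *v z))^2 \<le> mL * (norm z)^2" for z using yLall by simp
  obtain zR where zRall: "norm zR = 1 \<and> (norm (R *v zR))^2 = mR \<and> (\<forall>z. (norm (R *v z))^2 \<le> mR * (norm z)^2)"
    using gram_facts[of R] unfolding mR_def by (rule exE)
  have zR: "norm zR = 1" "(norm (R *v zR))^2 = mR" using zRall by simp_all
  have bR: "(norm (R *v z))^2 \<le> mR * (norm z)^2" for z using zRall by simp
  have mL0: "mL \<ge> 0" using yL(2) zero_le_power2[of "norm (L *v yL)"] by linarith
  have mR0: "mR \<ge> 0" using zR(2) zero_le_power2[of "norm (R *v zR)"] by linarith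
  have sigL: "(sigma_max L)^2 = mL" unfolding sigma_max_def mL_def[symmetric] using mL0 by simp
  have sigR: "(sigma_max R)^2 = mR" unfolding sigma_max_def mR_def[symmetric] using mR0 by simp
  have quad: "v \<bullet> (H *v v) = 2 * (\<Sum>a\<in>UNIV. \<Sum>b\<in>UNIV. (dd x v a b)^2)" for v
    unfolding H_def by (rule quad_form[OF res0])
  have ddform: "dd x v a b = (R *v (L_of v $ a))$b + (L *v (R_of v $ b))$a" for v a b
    unfolding dd_def x_def
    by (simp add: pack_def matrix_vector_mult_def L_of_def R_of_def sum.distrib mult.commute)
  have upper: "(\<Sum>a\<in>UNIV. \<Sum>b\<in>UNIV. (dd x v a b)^2) \<le> (mR + mL) * (norm v)^2" for v
  proof -
    define P :: "real^'n^'m" where "P = (\<chi> a. R *v (L_of v $ a))"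
    define Q :: "real^'m^'n" where "Q = (\<chi> b. L *v (R_of v $ b))"
    have "(\<Sum>a\<in>UNIV. \<Sum>b\<in>UNIV. (dd x v a b)^2) = (norm (P + transpose Q))^2"
      by (simp add: norm_mat_sq ddform P_def Q_def transpose_def)
    also have "\<dots> \<le> (norm P + norm (transpose Q))^2"
      by (intro power_mono norm_triangle_ineq) simp
    also have "\<dots> \<le> (mR + mL) * ((norm (L_of v))^2 + (norm (R_of v))^2)"
    proof (rule sq_bound)
      have "(norm P)^2 = (\<Sum>a\<in>UNIV. (norm (R *v (L_of v $ a)))^2)"
        by (simp add: norm_rows P_def)
      also have "\<dots> \<le> (\<Sum>a\<in>UNIV. mR * (norm (L_of v $ a))^2)"
        by (intro sum_mono bR)
      also have "\<dots> = mR * (norm (L_of v))^2" by (simp add: norm_rows sum_distrib_left)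
      finally show "(norm P)^2 \<le> mR * (norm (L_of v))^2" .
      have "(norm (transpose Q))^2 = (\<Sum>b\<in>UNIV. (norm (L *v (R_of v $ b)))^2)"
        unfolding norm_transpose_sq by (simp add: norm_rows Q_def)
      also have "\<dots> \<le> (\<Sum>b\<in>UNIV. mL * (norm (R_of v $ b))^2)"
        by (intro sum_mono bL)
      also have "\<dots> = mL * (norm (R_of v))^2" by (simp add: norm_rows sum_distrib_left)
      finally show "(norm (transpose Q))^2 \<le> mL * (norm (R_of v))^2" .
    qed (use mL0 mR0 in auto)
    also have "\<dots> = (mR + mL) * (norm v)^2" by (simp add: norm_pack_sq)
    finally show ?thesis .
  qed
  have lamH: "lambda_max H = v0 \<bullet> (H *v v0)"
    using v0 by (simp add: dot_square_norm)
  have up: "lambda_max H \<le> 2 * (mL + mR)"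
    using lamH quad[of v0] upper[of v0] v0(1) by (simp add: algebra_simps)
  have H0: "lambda_max H \<ge> 0"
    using lamH quad[of v0] by (simp add: sum_nonneg)
  obtain A :: "real^'m" where A: "norm A = 1" "L *v yL = norm (L *v yL) *\<^sub>R A"
    using unit_dir by blast
  obtain B :: "real^'n" where B: "norm B = 1" "R *v zR = norm (R *v zR) *\<^sub>R B"
    using unit_dir by blast
  have nLy: "norm (L *v yL) = sqrt mL" using real_sqrt_unique[OF yL(2) norm_ge_zero] by simp
  have nRz: "norm (R *v zR) = sqrt mR" using real_sqrt_unique[OF zR(2) norm_ge_zero] by simp
  define DL :: "real^'k^'m" where "DL = (\<chi> a c. sqrt mR * A$a * zR$c)"
  define DR :: "real^'k^'n" where "DR = (\<chi> b c. sqrt mL * B$b * yL$c)"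
  define w where "w = (pack DL DR :: real^(('m \<times> 'k) + ('n \<times> 'k)))"
  have Rz: "(R *v zR)$b = sqrt mR * B$b" for b using arg_cong[OF B(2), of "\<lambda>u. u$b"] nRz by simp
  have Ly: "(L *v yL)$a = sqrt mL * A$a" for a using arg_cong[OF A(2), of "\<lambda>u. u$a"] nLy by simp
  have ddw: "dd x w a b = (mR + mL) * (A$a * B$b)" for a b
  proof -
    have "(R *v (DL $ a))$b = sqrt mR * A$a * (R *v zR)$b"
      by (simp add: DL_def matrix_vector_mult_def sum_distrib_left algebra_simps)
    moreover have "(L *v (DR $ b))$a = sqrt mL * B$b * (L *v yL)$a"
      by (simp add: DR_def matrix_vector_mult_def sum_distrib_left algebra_simps)
    ultimately have "dd x w a b = sqrt mR * A$a * (sqrt mR * B$b) + sqrt mL * B$b * (sqrt mL * A$a)"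
      by (simp add: ddform w_def L_of_pack R_of_pack Rz Ly)
    also have "\<dots> = (sqrt mR * sqrt mR) * (A$a * B$b) + (sqrt mL * sqrt mL) * (A$a * B$b)"
      by (simp only: mult_ac)
    also have "\<dots> = (mR + mL) * (A$a * B$b)" using mL0 mR0 by (simp add: distrib_right)
    finally show ?thesis .
  qed
  have nA: "(\<Sum>a\<in>UNIV. (A$a)^2) = 1" using A(1) norm_vec_sq[of A] by simp
  have nB: "(\<Sum>b\<in>UNIV. (B$b)^2) = 1" using B(1) norm_vec_sq[of B] by simp
  have nyL: "(\<Sum>c\<in>UNIV. (yL$c)^2) = 1" using yL(1) norm_vec_sq[of yL] by simp
  have nzR: "(\<Sum>c\<in>UNIV. (zR$c)^2) = 1" using zR(1) norm_vec_sq[of zR] by simp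
  have sumw: "(\<Sum>a\<in>UNIV. \<Sum>b\<in>UNIV. (dd x w a b)^2) = (mR + mL)^2"
  proof -
    have "(\<Sum>a\<in>UNIV. \<Sum>b\<in>UNIV. (dd x w a b)^2) = (\<Sum>a\<in>UNIV. \<Sum>b\<in>UNIV. (mR + mL)^2 * ((A$a)^2 * (B$b)^2))"
      by (simp add: ddw power_mult_distrib)
    also have "\<dots> = (mR + mL)^2 * ((\<Sum>a\<in>UNIV. (A$a)^2) * (\<Sum>b\<in>UNIV. (B$b)^2))"
      unfolding sum_product by (simp only: sum_distrib_left)
    finally show ?thesis using nA nB by simp
  qed
  have DLsq: "(norm DL)^2 = mR * ((\<Sum>a\<in>UNIV. (A$a)^2) * (\<Sum>c\<in>UNIV. (zR$c)^2))"
  proof -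
    have "(norm DL)^2 = (\<Sum>a\<in>UNIV. \<Sum>c\<in>UNIV. mR * ((A$a)^2 * (zR$c)^2))"
      unfolding norm_mat_sq using mR0 by (simp add: DL_def power_mult_distrib mult.assoc)
    also have "\<dots> = mR * ((\<Sum>a\<in>UNIV. (A$a)^2) * (\<Sum>c\<in>UNIV. (zR$c)^2))"
      unfolding sum_product by (simp only: sum_distrib_left)
    finally show ?thesis .
  qed
  have DRsq: "(norm DR)^2 = mL * ((\<Sum>b\<in>UNIV. (B$b)^2) * (\<Sum>c\<in>UNIV. (yL$c)^2))"
  proof -
    have "(norm DR)^2 = (\<Sum>b\<in>UNIV. \<Sum>c\<in>UNIV. mL * ((B$b)^2 * (yL$c)^2))"
      unfolding norm_mat_sq using mL0 by (simp add: DR_def power_mult_distrib mult.assoc)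
    also have "\<dots> = mL * ((\<Sum>b\<in>UNIV. (B$b)^2) * (\<Sum>c\<in>UNIV. (yL$c)^2))"
      unfolding sum_product by (simp only: sum_distrib_left)
    finally show ?thesis .
  qed
  have normw: "(norm w)^2 = mR + mL"
    using DLsq DRsq nA nB nyL nzR by (simp add: norm_pack_sq w_def L_of_pack R_of_pack)
  have "2 * (mR + mL)^2 \<le> lambda_max H * (mR + mL)"
    using bH[of w] quad[of w] sumw normw by simp
  hence low: "lambda_max H \<ge> 2 * (mL + mR)"
  proof (cases "mR + mL > 0")
    case True
    assume h: "2 * (mR + mL)^2 \<le> lambda_max H * (mR + mL)"
    have "(2 * (mR + mL)) * (mR + mL) \<le> lambda_max H * (mR + mL)"
      using h by (simp add: power2_eq_square algebra_simps)
    hence "2 * (mR + mL) \<le> lambda_max H" using True by (simp add: mult_le_cancel_right)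
    thus ?thesis by simp
  next
    case False
    hence "mR + mL = 0" using mL0 mR0 by simp
    thus ?thesis using H0 by simp
  qed
  show ?thesis using up low sigL sigR unfolding H_def x_def by simp
qed


end
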